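(* Let $X$ be a countably infinite set and $W=\{0,1\}^X$. The Sum Preorder $\succeq_{SP}$ is the largest relation in the set of preorders on $W$ satisfying Strong Pareto and Permutation Invariance. That is, $\succeq_{SP}$ is a preorder on $W$ satisfying both axioms, and for every preorder $\succeq$ on $W$ satisfying both axioms and all $w,v\in W$, $w\succeq v$ implies $w\succeq_{SP} v$.
   Context: Worlds are functions $w:X\to\mathbb R$. For a preorder $\succeq$, $w\succ v$ means $w\succeq v$ and not $v\succeq w$. For a permutation $\pi$ of $X$, $\pi(w)(x)=w(\pi(x))$. Strong Pareto: for all $w,v\in W$, if $w(x)\ge v(x)$ for all $x$ and $w(x)>v(x)$ for some $x$, then $w\succ v$. Permutation Invariance: for all $w,v\in W$ and every permutation $\pi$ of $X$, $w\succeq v$ iff $\pi(w)\succeq\pi(v)$. A series $\sum_{x\in X}a_x$ converges unconditionally (diverges unconditionally to $+\infty$) if it converges to the same value (diverges to $+\infty$) under every enumeration of $X$. Sum Preorder: $w\succeq_{SP} v$ iff $\sum_{x\in X}(w(x)-v(x))$ converges unconditionally to some $r\ge 0$ or diverges unconditionally to $+\infty$. A relation $\succeq$ weakly extends $\succeq'$ if $w\succeq' v$ implies $w\succeq v$; a relation is the largest in a set $\mathcal R$ of relations if it belongs to $\mathcal R$ and weakly extends every member of $\mathcal R$. *)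

theory Defs
  imports "HOL-Analysis.Analysis"
begin

definition W01 :: "('x \<Rightarrow> real) set" where
  "W01 = {w. \<forall>x. w x \<in> {0, 1}}"

definition preorder_on_worlds :: "('x \<Rightarrow> real) set \<Rightarrow> (('x \<Rightarrow> real) \<times> ('x \<Rightarrow> real)) set \<Rightarrow> bool" where
  "preorder_on_worlds W R \<longleftrightarrow> R \<subseteq> W \<times> W \<and> (\<forall>w\<in>W. (w, w) \<in> R) \<and>
     (\<forall>u v w. (u, v) \<in> R \<longrightarrow> (v, w) \<in> R \<longrightarrow> (u, w) \<in> R)"

definition strictly :: "('a \<times> 'a) set \<Rightarrow> 'a \<Rightarrow> 'a \<Rightarrow> bool" where
  "strictly R w v \<longleftrightarrow> (w, v) \<in> R \<and> (v, w) \<notin> R"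

definition strong_pareto :: "('x \<Rightarrow> real) set \<Rightarrow> (('x \<Rightarrow> real) \<times> ('x \<Rightarrow> real)) set \<Rightarrow> bool" where
  "strong_pareto W R \<longleftrightarrow> (\<forall>w\<in>W. \<forall>v\<in>W.
     (\<forall>x. w x \<ge> v x) \<and> (\<exists>x. w x > v x) \<longrightarrow> strictly R w v)"

text \<open>\<open>\<pi>(w)(x) = w(\<pi>(x))\<close>, i.e. \<open>\<pi>(w) = w \<circ> \<pi>\<close>.\<close>
definition permutation_invariant :: "('x \<Rightarrow> real) set \<Rightarrow> (('x \<Rightarrow> real) \<times> ('x \<Rightarrow> real)) set \<Rightarrow> bool" where
  "permutation_invariant W R \<longleftrightarrow> (\<forall>w\<in>W. \<forall>v\<in>W. \<forall>\<pi>::'x \<Rightarrow> 'x. bij \<pi> \<longrightarrow>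
     ((w, v) \<in> R \<longleftrightarrow> (w \<circ> \<pi>, v \<circ> \<pi>) \<in> R))"

definition converges_unconditionally :: "('x \<Rightarrow> real) \<Rightarrow> real \<Rightarrow> bool" where
  "converges_unconditionally a r \<longleftrightarrow> (\<forall>e::nat \<Rightarrow> 'x. bij e \<longrightarrow> (\<lambda>n. a (e n)) sums r)"

definition diverges_unconditionally_top :: "('x \<Rightarrow> real) \<Rightarrow> bool" where
  "diverges_unconditionally_top a \<longleftrightarrow>
     (\<forall>e::nat \<Rightarrow> 'x. bij e \<longrightarrow> filterlim (\<lambda>n. \<Sum>i<n. a (e i)) at_top sequentially)"

definition sum_preorder :: "('x \<Rightarrow> real) set \<Rightarrow> (('x \<Rightarrow> real) \<times> ('x \<Rightarrow> real)) set" where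
  "sum_preorder W = {(w, v). w \<in> W \<and> v \<in> W \<and>
     ((\<exists>r\<ge>0. converges_unconditionally (\<lambda>x. w x - v x) r) \<or>
      diverges_unconditionally_top (\<lambda>x. w x - v x))}"

end

theory Submission
  imports Defs
begin

definition AA :: "('x \<Rightarrow> real) \<Rightarrow> ('x \<Rightarrow> real) \<Rightarrow> 'x set" where
  "AA w v = {x. w x = 1 \<and> v x = 0}"

definition PP :: "('x \<Rightarrow> real) \<Rightarrow> ('x \<Rightarrow> real) \<Rightarrow> bool" where
  "PP w v \<longleftrightarrow> finite (AA v w) \<and> (infinite (AA w v) \<or> card (AA v w) \<le> card (AA w v))"

lemma W01_val: "w \<in> W01 \<Longrightarrow> w x = 0 \<or> w x = 1"
  by (auto simp: W01_def)

lemma diff_of_bool: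
  assumes "w \<in> W01" "v \<in> W01"
  shows "w x - v x = of_bool (x \<in> AA w v) - of_bool (x \<in> AA v w)"
  using W01_val[OF assms(1), of x] W01_val[OF assms(2), of x] by (auto simp: AA_def)

lemma AA_disj: "AA w v \<inter> AA v w = {}"
  by (auto simp: AA_def)

lemma partial_sum:
  fixes e :: "nat \<Rightarrow> 'x" and n :: nat
  assumes "w \<in> W01" "v \<in> W01"
  shows "(\<Sum>i<n. w (e i) - v (e i)) =
    real (card ({..<n} \<inter> {i. e i \<in> AA w v})) - real (card ({..<n} \<inter> {i. e i \<in> AA v w}))"
proof -
  have "(\<Sum>i<n. w (e i) - v (e i)) = (\<Sum>i<n. of_bool (e i \<in> AA w v)) - (\<Sum>i<n. (of_bool (e i \<in> AA v w)::real))"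
    by (simp add: diff_of_bool[OF assms] sum_subtractf)
  also have "\<dots> = real (card ({..<n} \<inter> {i. e i \<in> AA w v})) - real (card ({..<n} \<inter> {i. e i \<in> AA v w}))"
  proof -
    have "(\<Sum>i<n. (of_bool (e i \<in> AA w v)::real)) = real (card ({..<n} \<inter> {i. e i \<in> AA w v}))"
      by (rule sum_of_bool_eq) simp_all
    moreover have "(\<Sum>i<n. (of_bool (e i \<in> AA v w)::real)) = real (card ({..<n} \<inter> {i. e i \<in> AA v w}))"
      by (rule sum_of_bool_eq) simp_all
    ultimately show ?thesis by simp
  qed
  finally show ?thesis .
qed

lemma card_count_le:
  fixes e :: "nat \<Rightarrow> 'x"
  assumes "inj e" "finite A"
  shows "card ({..<n} \<inter> {i. e i \<in> A}) \<le> card A"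
  by (rule card_inj_on_le[OF _ _ assms(2)]) (use assms(1) in \<open>auto simp: inj_on_def\<close>)

lemma count_tendsto:
  fixes e :: "nat \<Rightarrow> 'x"
  assumes "inj e" "infinite (e -` A)"
  shows "filterlim (\<lambda>n. real (card ({..<n} \<inter> {i. e i \<in> A}))) at_top sequentially"
proof (subst filterlim_at_top, intro allI)
  fix Z :: real
  obtain F where F: "finite F" "card F = nat \<lceil>Z\<rceil>" "F \<subseteq> e -` A"
    using infinite_arbitrarily_large[OF assms(2)] by blast
  show "eventually (\<lambda>n. Z \<le> real (card ({..<n} \<inter> {i. e i \<in> A}))) sequentially"
    unfolding eventually_sequentially
  proof (intro exI allI impI)
    fix n assume n: "Suc (Max (insert 0 F)) \<le> n"
    have "F \<subseteq> {..<n} \<inter> {i. e i \<in> A}"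
    proof
      fix i assume "i \<in> F"
      then have "i \<le> Max (insert 0 F)" using F by simp
      then have "i < n" using n by linarith
      then show "i \<in> {..<n} \<inter> {i. e i \<in> A}" using F \<open>i \<in> F\<close> by auto
    qed
    then have "card F \<le> card ({..<n} \<inter> {i. e i \<in> A})"
      by (intro card_mono) auto
    then show "Z \<le> real (card ({..<n} \<inter> {i. e i \<in> A}))"
      using F(2) by linarith
  qed
qed

lemma swap_props:
  assumes f: "bij_betw f A B" and disj: "A \<inter> B = {}"
    and \<sigma>_def: "\<sigma> = (\<lambda>x. if x \<in> A then f x else if x \<in> B then inv_into A f x else x)"
  shows "\<And>x. \<sigma> (\<sigma> x) = x" "bij \<sigma>" "\<And>x. x \<in> A \<Longrightarrow> \<sigma> x \<in> B"
    "\<And>x. x \<in> B \<Longrightarrow> \<sigma> x \<in> A" "\<And>x. x \<notin> A \<Longrightarrow> x \<notin> B \<Longrightarrow> \<sigma> x = x"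
proof -
  have inj: "inj_on f A" and img: "f ` A = B" using f by (auto simp: bij_betw_def)
  show A: "\<And>x. x \<in> A \<Longrightarrow> \<sigma> x \<in> B" using img by (auto simp: \<sigma>_def)
  show B: "\<And>x. x \<in> B \<Longrightarrow> \<sigma> x \<in> A" using disj img
    by (auto simp: \<sigma>_def inv_into_into)
  show inv: "\<And>x. \<sigma> (\<sigma> x) = x"
  proof -
    fix x
    show "\<sigma> (\<sigma> x) = x"
    proof (cases "x \<in> A")
      case True
      then have "f x \<in> B" "f x \<notin> A" using img disj by auto
      then show ?thesis using True inj by (simp add: \<sigma>_def)
    next
      case False
      note F = False
      show ?thesis
      proof (cases "x \<in> B")
        case True
        then have "inv_into A f x \<in> A" using img by (auto intro: inv_into_into)
        then show ?thesis using True F img by (simp add: \<sigma>_def f_inv_into_f)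
      next
        case False
        then show ?thesis using F by (simp add: \<sigma>_def)
      qed
    qed
  qed
  show "bij \<sigma>" by (rule involuntory_imp_bij) (rule inv)
  show "\<And>x. x \<notin> A \<Longrightarrow> x \<notin> B \<Longrightarrow> \<sigma> x = x" by (simp add: \<sigma>_def)
qed

lemma sum_S:
  assumes "w \<in> W01" "v \<in> W01" "finite S" "AA w v \<subseteq> S" "AA v w \<subseteq> S"
  shows "(\<Sum>x\<in>S. w x - v x) = real (card (AA w v)) - real (card (AA v w))"
proof -
  have "(\<Sum>x\<in>S. w x - v x) = (\<Sum>x\<in>S. (of_bool (x \<in> AA w v)::real)) - (\<Sum>x\<in>S. (of_bool (x \<in> AA v w)::real))"
    by (simp add: diff_of_bool[OF assms(1,2)] sum_subtractf)
  also have "(\<Sum>x\<in>S. (of_bool (x \<in> AA w v)::real)) = real (card (S \<inter> {x. x \<in> AA w v}))"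
    by (rule sum_of_bool_eq) (use assms in simp_all)
  also have "(\<Sum>x\<in>S. (of_bool (x \<in> AA v w)::real)) = real (card (S \<inter> {x. x \<in> AA v w}))"
    by (rule sum_of_bool_eq) (use assms in simp_all)
  also have "S \<inter> {x. x \<in> AA w v} = AA w v" using assms by auto
  also have "S \<inter> {x. x \<in> AA v w} = AA v w" using assms by auto
  finally show ?thesis .
qed

lemma sums_fin:
  fixes e :: "nat \<Rightarrow> 'x"
  assumes "w \<in> W01" "v \<in> W01" "finite (AA w v)" "finite (AA v w)" "bij e"
  shows "(\<lambda>n. w (e n) - v (e n)) sums (real (card (AA w v)) - real (card (AA v w)))"
proof -
  define S where "S = AA w v \<union> AA v w"
  have fS: "finite S" using assms by (simp add: S_def)
  have inj: "inj e" using assms(5) by (simp add: bij_def)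
  have fN: "finite (e -` S)" using fS inj by (simp add: finite_vimageI)
  have "(\<lambda>n. w (e n) - v (e n)) sums (\<Sum>n\<in>e -` S. w (e n) - v (e n))"
    by (rule sums_finite[OF fN]) (auto simp: S_def diff_of_bool[OF assms(1,2)])
  also have "(\<Sum>n\<in>e -` S. w (e n) - v (e n)) = (\<Sum>x\<in>S. w x - v x)"
  proof (rule sum.reindex_bij_betw)
    have "surj e" using assms(5) by (simp add: bij_def)
    then show "bij_betw e (e -` S) S" using inj
      by (simp add: bij_betw_def image_vimage_eq inj_on_subset[OF inj])
  qed
  also have "\<dots> = real (card (AA w v)) - real (card (AA v w))"
    by (rule sum_S[OF assms(1,2) fS]) (auto simp: S_def)
  finally show ?thesis .
qed

lemma enum_exists:
  assumes "countable (UNIV :: 'x set)" "infinite (UNIV :: 'x set)"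
  obtains e :: "nat \<Rightarrow> 'x" where "bij e"
  using bij_betw_from_nat_into[OF assms] by (auto simp: bij_def bij_betw_def)

lemma cu_iff:
  assumes cnt: "countable (UNIV :: 'x set)" and inf: "infinite (UNIV :: 'x set)"
    and wv: "w \<in> W01" "v \<in> W01"
  shows "(\<exists>r\<ge>0. converges_unconditionally (\<lambda>x::'x. w x - v x) r) \<longleftrightarrow>
    finite (AA w v) \<and> finite (AA v w) \<and> card (AA v w) \<le> card (AA w v)"
proof
  assume "finite (AA w v) \<and> finite (AA v w) \<and> card (AA v w) \<le> card (AA w v)"
  then show "\<exists>r\<ge>0. converges_unconditionally (\<lambda>x::'x. w x - v x) r"
    by (intro exI[of _ "real (card (AA w v)) - real (card (AA v w))"])
       (auto simp: converges_unconditionally_def intro!: sums_fin[OF wv])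
next
  assume "\<exists>r\<ge>0. converges_unconditionally (\<lambda>x::'x. w x - v x) r"
  then obtain r where r: "r \<ge> 0" "converges_unconditionally (\<lambda>x::'x. w x - v x) r" by blast
  obtain e :: "nat \<Rightarrow> 'x" where e: "bij e" using enum_exists[OF cnt inf] by blast
  have s: "(\<lambda>n. w (e n) - v (e n)) sums r" using r e by (simp add: converges_unconditionally_def)
  then have "(\<lambda>n. w (e n) - v (e n)) \<longlonglongrightarrow> 0"
    using summable_LIMSEQ_zero sums_summable by blast
  then have "eventually (\<lambda>n. norm (w (e n) - v (e n)) < 1) sequentially"
    by (rule order_tendstoD(2)[OF tendsto_norm, simplified]) simp
  then obtain N where N: "\<And>n. n \<ge> N \<Longrightarrow> \<bar>w (e n) - v (e n)\<bar> < 1"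
    by (auto simp: eventually_sequentially)
  have zero: "w (e n) - v (e n) = 0" if "n \<ge> N" for n
    using N[OF that] W01_val[OF wv(1), of "e n"] W01_val[OF wv(2), of "e n"] by auto
  have sub: "AA w v \<union> AA v w \<subseteq> e ` {..<N}"
  proof
    fix x assume x: "x \<in> AA w v \<union> AA v w"
    obtain n where n: "x = e n" using e by (metis bij_pointE)
    have "n < N"
    proof (rule ccontr)
      assume "\<not> n < N"
      then have "w x - v x = 0" using zero n by simp
      then show False using x by (auto simp: AA_def)
    qed
    then show "x \<in> e ` {..<N}" using n by auto
  qed
  then have fin: "finite (AA w v)" "finite (AA v w)"
    by (auto intro: finite_subset)
  have "r = real (card (AA w v)) - real (card (AA v w))"
    using sums_unique2[OF s sums_fin[OF wv fin e]] .
  then show "finite (AA w v) \<and> finite (AA v w) \<and> card (AA v w) \<le> card (AA w v)"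
    using fin r(1) by simp
qed

lemma countable_bij_exists:
  assumes "countable A" "infinite A" "countable B" "infinite B"
  obtains f where "bij_betw f A B"
proof -
  obtain g :: "'a \<Rightarrow> nat" where g: "bij_betw g A UNIV" using countableE_infinite[OF assms(1,2)] by blast
  obtain h :: "'b \<Rightarrow> nat" where h: "bij_betw h B UNIV" using countableE_infinite[OF assms(3,4)] by blast
  have "bij_betw (inv_into B h \<circ> g) A B"
    by (rule bij_betw_trans[OF g bij_betw_inv_into[OF h]])
  then show ?thesis using that by blast
qed

lemma du_iff:
  assumes cnt: "countable (UNIV :: 'x set)" and inf: "infinite (UNIV :: 'x set)"
    and wv: "w \<in> W01" "v \<in> W01"
  shows "diverges_unconditionally_top (\<lambda>x::'x. w x - v x) \<longleftrightarrow>
    infinite (AA w v) \<and> finite (AA v w)"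
proof
  assume a: "infinite (AA w v) \<and> finite (AA v w)"
  show "diverges_unconditionally_top (\<lambda>x::'x. w x - v x)"
    unfolding diverges_unconditionally_top_def
  proof (intro allI impI)
    fix e :: "nat \<Rightarrow> 'x" assume e: "bij e"
    have inj: "inj e" and surj: "surj e" using e by (auto simp: bij_def)
    have "infinite (e -` AA w v)"
    proof
      assume "finite (e -` AA w v)"
      then have "finite (e ` (e -` AA w v))" by (rule finite_imageI)
      then show False using a surj by (simp add: image_vimage_eq)
    qed
    then have lim: "filterlim (\<lambda>n. real (card ({..<n} \<inter> {i. e i \<in> AA w v}))) at_top sequentially"
      by (rule count_tendsto[OF inj])
    show "filterlim (\<lambda>n. \<Sum>i<n. w (e i) - v (e i)) at_top sequentially"
      unfolding filterlim_at_top
    proof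
      fix Z :: real
      have ev: "eventually (\<lambda>n. Z + real (card (AA v w)) \<le> real (card ({..<n} \<inter> {i. e i \<in> AA w v}))) sequentially"
        using lim unfolding filterlim_at_top by blast
      show "eventually (\<lambda>n. Z \<le> (\<Sum>i<n. w (e i) - v (e i))) sequentially"
      proof (rule eventually_mono[OF ev])
        fix n
        assume n: "Z + real (card (AA v w)) \<le> real (card ({..<n} \<inter> {i. e i \<in> AA w v}))"
        have "card ({..<n} \<inter> {i. e i \<in> AA v w}) \<le> card (AA v w)"
          using card_count_le[OF inj] a by blast
        then show "Z \<le> (\<Sum>i<n. w (e i) - v (e i))"
          using n by (simp add: partial_sum[OF wv])
      qed
    qed
  qed
next
  assume d: "diverges_unconditionally_top (\<lambda>x::'x. w x - v x)"
  obtain e :: "nat \<Rightarrow> 'x" where e: "bij e" using enum_exists[OF cnt inf] by blast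
  have inj: "inj e" using e by (simp add: bij_def)
  have lim: "filterlim (\<lambda>n. \<Sum>i<n. w (e i) - v (e i)) at_top sequentially"
    using d e by (simp add: diverges_unconditionally_top_def)
  have infA: "infinite (AA w v)"
  proof
    assume fA: "finite (AA w v)"
    have "eventually (\<lambda>n. real (card (AA w v)) + 1 \<le> (\<Sum>i<n. w (e i) - v (e i))) sequentially"
      using lim unfolding filterlim_at_top by blast
    moreover have bnd: "(\<Sum>i<n. w (e i) - v (e i)) \<le> real (card (AA w v))" for n
    proof -
      have "card ({..<n} \<inter> {i. e i \<in> AA w v}) \<le> card (AA w v)"
        using card_count_le[OF inj fA] by blast
      then show ?thesis by (simp add: partial_sum[OF wv])
    qed
    ultimately have "eventually (\<lambda>n. False) sequentially"
      by (elim eventually_mono) (use bnd in \<open>smt (verit)\<close>)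
    then show False by simp
  qed
  have finB: "finite (AA v w)"
  proof (rule ccontr)
    assume iB: "infinite (AA v w)"
    obtain f where f: "bij_betw f (AA w v) (AA v w)"
      using countable_bij_exists[OF countable_subset[OF _ cnt] infA countable_subset[OF _ cnt] iB] by blast
    define \<sigma> where "\<sigma> = (\<lambda>x. if x \<in> AA w v then f x else if x \<in> AA v w then inv_into (AA w v) f x else x)"
    note sp = swap_props[OF f AA_disj \<sigma>_def]
    have neg: "w (\<sigma> x) - v (\<sigma> x) = - (w x - v x)" for x
    proof -
      consider "x \<in> AA w v" | "x \<in> AA v w" | "x \<notin> AA w v" "x \<notin> AA v w" by blast
      then show ?thesis
      proof cases
        case 1
        then have "\<sigma> x \<in> AA v w" by (rule sp(3))
        then show ?thesis using 1 AA_disj[of w v] by (auto simp: diff_of_bool[OF wv])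
      next
        case 2
        then have "\<sigma> x \<in> AA w v" by (rule sp(4))
        then show ?thesis using 2 AA_disj[of w v] by (auto simp: diff_of_bool[OF wv])
      next
        case 3
        then show ?thesis using sp(5)[OF 3] by (simp add: diff_of_bool[OF wv])
      qed
    qed
    have "bij (\<sigma> \<circ> e)" using sp(2) e by (rule bij_comp[rotated])
    then have lim2: "filterlim (\<lambda>n. \<Sum>i<n. w ((\<sigma> \<circ> e) i) - v ((\<sigma> \<circ> e) i)) at_top sequentially"
      using d unfolding diverges_unconditionally_top_def by blast
    have "eventually (\<lambda>n. 1 \<le> (\<Sum>i<n. w (e i) - v (e i))) sequentially"
      using lim unfolding filterlim_at_top by blast
    moreover have "eventually (\<lambda>n. 1 \<le> (\<Sum>i<n. w (\<sigma> (e i)) - v (\<sigma> (e i)))) sequentially"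
      using lim2 unfolding filterlim_at_top o_def by blast
    ultimately have "eventually (\<lambda>n. False) sequentially"
    proof (rule eventually_elim2)
      fix n
      assume "1 \<le> (\<Sum>i<n. w (e i) - v (e i))" "1 \<le> (\<Sum>i<n. w (\<sigma> (e i)) - v (\<sigma> (e i)))"
      moreover have "(\<Sum>i<n. w (\<sigma> (e i)) - v (\<sigma> (e i))) = - (\<Sum>i<n. w (e i) - v (e i))"
        by (simp only: neg sum_negf)
      ultimately show False by linarith
    qed
    then show False by simp
  qed
  show "infinite (AA w v) \<and> finite (AA v w)" using infA finB by blast
qed

lemma SP_iff:
  assumes cnt: "countable (UNIV :: 'x set)" and inf: "infinite (UNIV :: 'x set)"
  shows "((w::'x \<Rightarrow> real), v) \<in> sum_preorder W01 \<longleftrightarrow> w \<in> W01 \<and> v \<in> W01 \<and> PP w v"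
proof (cases "w \<in> W01 \<and> v \<in> W01")
  case True
  then have wv: "w \<in> W01" "v \<in> W01" by auto
  show ?thesis
    unfolding sum_preorder_def PP_def
    using cu_iff[OF cnt inf wv] du_iff[OF cnt inf wv] wv by auto
next
  case False
  then show ?thesis by (auto simp: sum_preorder_def)
qed

lemma cu_perm:
  assumes "bij (\<pi>::'x \<Rightarrow> 'x)"
  shows "converges_unconditionally (\<lambda>x. d (\<pi> x)) r \<longleftrightarrow> converges_unconditionally d r"
  unfolding converges_unconditionally_def
proof (intro iffI allI impI)
  fix e :: "nat \<Rightarrow> 'x"
  assume h: "\<forall>e::nat \<Rightarrow> 'x. bij e \<longrightarrow> (\<lambda>n. d (\<pi> (e n))) sums r" and e: "bij e"
  have "bij (inv \<pi> \<circ> e)" by (rule bij_comp[OF e bij_imp_bij_inv[OF assms]])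
  from h[rule_format, OF this] have "(\<lambda>n. d (\<pi> ((inv \<pi> \<circ> e) n))) sums r" .
  moreover have "\<pi> (inv \<pi> y) = y" for y using assms by (simp add: bij_is_surj surj_f_inv_f)
  ultimately show "(\<lambda>n. d (e n)) sums r" by simp
next
  fix e :: "nat \<Rightarrow> 'x"
  assume h: "\<forall>e::nat \<Rightarrow> 'x. bij e \<longrightarrow> (\<lambda>n. d (e n)) sums r" and e: "bij e"
  have "bij (\<pi> \<circ> e)" by (rule bij_comp[OF e assms])
  from h[rule_format, OF this] show "(\<lambda>n. d (\<pi> (e n))) sums r" by simp
qed

lemma du_perm:
  assumes "bij (\<pi>::'x \<Rightarrow> 'x)"
  shows "diverges_unconditionally_top (\<lambda>x. d (\<pi> x)) \<longleftrightarrow> diverges_unconditionally_top d"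
  unfolding diverges_unconditionally_top_def
proof (intro iffI allI impI)
  fix e :: "nat \<Rightarrow> 'x"
  assume h: "\<forall>e::nat \<Rightarrow> 'x. bij e \<longrightarrow> filterlim (\<lambda>n. \<Sum>i<n. d (\<pi> (e i))) at_top sequentially" and e: "bij e"
  have "bij (inv \<pi> \<circ> e)" by (rule bij_comp[OF e bij_imp_bij_inv[OF assms]])
  from h[rule_format, OF this] have "filterlim (\<lambda>n. \<Sum>i<n. d (\<pi> ((inv \<pi> \<circ> e) i))) at_top sequentially" .
  moreover have "\<pi> (inv \<pi> y) = y" for y using assms by (simp add: bij_is_surj surj_f_inv_f)
  ultimately show "filterlim (\<lambda>n. \<Sum>i<n. d (e i)) at_top sequentially" by simp
next
  fix e :: "nat \<Rightarrow> 'x"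
  assume h: "\<forall>e::nat \<Rightarrow> 'x. bij e \<longrightarrow> filterlim (\<lambda>n. \<Sum>i<n. d (e i)) at_top sequentially" and e: "bij e"
  have "bij (\<pi> \<circ> e)" by (rule bij_comp[OF e assms])
  from h[rule_format, OF this] have "filterlim (\<lambda>n. \<Sum>i<n. d ((\<pi> \<circ> e) i)) at_top sequentially" .
  then show "filterlim (\<lambda>n. \<Sum>i<n. d (\<pi> (e i))) at_top sequentially" by simp
qed

lemma W01_comp: "w \<in> W01 \<Longrightarrow> w \<circ> \<pi> \<in> W01"
  by (auto simp: W01_def)

lemma SP_perm:
  assumes "bij (\<pi>::'x \<Rightarrow> 'x)" "w \<in> W01" "v \<in> W01"
  shows "(w, v) \<in> sum_preorder W01 \<longleftrightarrow> (w \<circ> \<pi>, v \<circ> \<pi>) \<in> sum_preorder W01"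
proof -
  have c: "(\<exists>r\<ge>0. converges_unconditionally (\<lambda>x. (w \<circ> \<pi>) x - (v \<circ> \<pi>) x) r) \<longleftrightarrow>
       (\<exists>r\<ge>0. converges_unconditionally (\<lambda>x. w x - v x) r)"
    using cu_perm[OF assms(1), of "\<lambda>y. w y - v y"] unfolding comp_def by simp
  have d: "diverges_unconditionally_top (\<lambda>x. (w \<circ> \<pi>) x - (v \<circ> \<pi>) x) \<longleftrightarrow>
       diverges_unconditionally_top (\<lambda>x. w x - v x)"
    using du_perm[OF assms(1), of "\<lambda>y. w y - v y"] unfolding comp_def by simp
  have m: "w \<circ> \<pi> \<in> W01" "v \<circ> \<pi> \<in> W01" using W01_comp assms by auto
  show ?thesis
    unfolding sum_preorder_def mem_Collect_eq case_prod_conv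
    using c d m assms(2,3) by blast
qed

lemma PP_trans:
  assumes w: "w \<in> W01" and v: "v \<in> W01" and u: "u \<in> W01"
    and wv: "PP w v" and vu: "PP v u"
  shows "PP w u"
proof -
  have val: "\<And>x. (w x = 0 \<or> w x = 1) \<and> (v x = 0 \<or> v x = 1) \<and> (u x = 0 \<or> u x = 1)"
    using W01_val[OF w] W01_val[OF v] W01_val[OF u] by blast
  have s1: "AA u w \<subseteq> AA u v \<union> AA v w"
    proof
      fix x assume "x \<in> AA u w"
      then show "x \<in> AA u v \<union> AA v w" using val[of x] by (auto simp: AA_def)
    qed
  have fuw: "finite (AA u w)"
    using wv vu unfolding PP_def by (meson finite_Un finite_subset s1)
  show ?thesis
  proof (cases "infinite (AA w v) \<or> infinite (AA v u)")
    case True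
    have s2: "AA w v \<subseteq> AA w u \<union> AA u v"
    proof
      fix x assume "x \<in> AA w v"
      then show "x \<in> AA w u \<union> AA u v" using val[of x] by (auto simp: AA_def)
    qed
    have s3: "AA v u \<subseteq> AA w u \<union> AA v w"
    proof
      fix x assume "x \<in> AA v u"
      then show "x \<in> AA w u \<union> AA v w" using val[of x] by (auto simp: AA_def)
    qed
    have "infinite (AA w u)"
    proof
      assume "finite (AA w u)"
      then show False using True wv vu s2 s3 unfolding PP_def by (meson finite_Un finite_subset)
    qed
    then show ?thesis using fuw by (simp add: PP_def)
  next
    case False
    then have f: "finite (AA w v)" "finite (AA v u)" "finite (AA v w)" "finite (AA u v)"
      using wv vu by (auto simp: PP_def)
    have c: "card (AA v w) \<le> card (AA w v)" "card (AA u v) \<le> card (AA v u)"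
      using wv vu f by (auto simp: PP_def)
    have s4: "AA w u \<subseteq> AA w v \<union> AA v u"
    proof
      fix x assume "x \<in> AA w u"
      then show "x \<in> AA w v \<union> AA v u" using val[of x] by (auto simp: AA_def)
    qed
    define S where "S = AA w v \<union> AA v u \<union> AA v w \<union> AA u v"
    have fS: "finite S" using f by (simp add: S_def)
    have "(\<Sum>x\<in>S. w x - u x) = (\<Sum>x\<in>S. w x - v x) + (\<Sum>x\<in>S. v x - u x)"
      by (simp add: sum.distrib[symmetric])
    moreover have "(\<Sum>x\<in>S. w x - u x) = real (card (AA w u)) - real (card (AA u w))"
      by (rule sum_S[OF w u fS]) (use s1 s4 in \<open>auto simp: S_def\<close>)
    moreover have "(\<Sum>x\<in>S. w x - v x) = real (card (AA w v)) - real (card (AA v w))"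
      by (rule sum_S[OF w v fS]) (auto simp: S_def)
    moreover have "(\<Sum>x\<in>S. v x - u x) = real (card (AA v u)) - real (card (AA u v))"
      by (rule sum_S[OF v u fS]) (auto simp: S_def)
    ultimately have "card (AA u w) \<le> card (AA w u)" using c by linarith
    then show ?thesis using fuw by (simp add: PP_def)
  qed
qed

lemma inject_lemma:
  assumes cnt: "countable (UNIV :: 'x set)" and nP: "\<not> PP (w::'x \<Rightarrow> real) v"
  obtains f B' b0 where "bij_betw f (AA w v) B'" "B' \<subseteq> AA v w" "b0 \<in> AA v w" "b0 \<notin> B'"
proof (cases "finite (AA v w)")
  case True
  then have fA: "finite (AA w v)" and lt: "card (AA w v) < card (AA v w)"
    using nP by (auto simp: PP_def)
  obtain T where T: "T \<subseteq> AA v w" "card T = card (AA w v)" "finite T"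
    using obtain_subset_with_card_n[of "card (AA w v)" "AA v w"] lt by auto
  obtain h where h: "bij_betw h (AA w v) T" using finite_same_card_bij[OF fA T(3)] T(2) by auto
  have "T \<noteq> AA v w" using T(2) lt by auto
  then obtain b0 where "b0 \<in> AA v w" "b0 \<notin> T" using T(1) by auto
  then show ?thesis using that h T(1) by blast
next
  case False
  then obtain b0 where b0: "b0 \<in> AA v w" by (metis finite.emptyI ex_in_conv)
  have "infinite (AA v w - {b0})" using False by simp
  then obtain g :: "nat \<Rightarrow> 'x" where g: "inj g" "range g \<subseteq> AA v w - {b0}"
    using infinite_countable_subset by blast
  have cA: "countable (AA w v)" using countable_subset[OF _ cnt] by blast
  have inj: "inj_on (g \<circ> to_nat_on (AA w v)) (AA w v)"
    by (rule comp_inj_on[OF inj_on_to_nat_on[OF cA]]) (rule inj_on_subset[OF g(1)], simp)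
  have "bij_betw (g \<circ> to_nat_on (AA w v)) (AA w v) ((g \<circ> to_nat_on (AA w v)) ` AA w v)"
    using inj by (rule inj_on_imp_bij_betw)
  moreover have "(g \<circ> to_nat_on (AA w v)) ` AA w v \<subseteq> AA v w - {b0}" using g(2) by auto
  ultimately show ?thesis using that b0 by blast
qed

lemma maximal:
  assumes cnt: "countable (UNIV :: 'x set)"
    and pre: "preorder_on_worlds (W01 :: ('x \<Rightarrow> real) set) R"
    and sp: "strong_pareto W01 R" and pi: "permutation_invariant W01 R"
    and w: "w \<in> W01" and v: "v \<in> W01" and wvR: "(w, v) \<in> R"
  shows "PP w v"
proof (rule ccontr)
  assume nP: "\<not> PP w v"
  obtain f B' b0 where f: "bij_betw f (AA w v) B'" and B': "B' \<subseteq> AA v w"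
    and b0: "b0 \<in> AA v w" "b0 \<notin> B'"
    using inject_lemma[OF cnt nP] by blast
  have disj: "AA w v \<inter> B' = {}" using B' AA_disj[of w v] by blast
  define \<sigma> where "\<sigma> = (\<lambda>x. if x \<in> AA w v then f x else if x \<in> B' then inv_into (AA w v) f x else x)"
  note S = swap_props[OF f disj \<sigma>_def]
  define u where "u = w \<circ> \<sigma>"
  have u: "u \<in> W01" unfolding u_def by (rule W01_comp[OF w])
  have le: "u x \<le> v x" for x
  proof -
    consider "x \<in> AA w v" | "x \<in> B'" | "x \<notin> AA w v" "x \<notin> B'" by blast
    then show ?thesis
    proof cases
      case 1
      then have "\<sigma> x \<in> AA v w" using S(3) B' by blast
      then have "u x = 0" by (simp add: u_def AA_def)
      then show ?thesis using W01_val[OF v, of x] by auto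
    next
      case 2
      then have "v x = 1" using B' by (auto simp: AA_def)
      then show ?thesis using W01_val[OF u, of x] by auto
    next
      case 3
      then have "u x = w x" using S(5) by (simp add: u_def)
      then show ?thesis using 3(1) W01_val[OF w, of x] W01_val[OF v, of x] by (auto simp: AA_def)
    qed
  qed
  have b0A: "b0 \<notin> AA w v" using b0(1) AA_disj[of w v] by blast
  have "u b0 < v b0"
  proof -
    have "u b0 = w b0" using S(5)[OF b0A b0(2)] by (simp add: u_def)
    then show ?thesis using b0(1) by (simp add: AA_def)
  qed
  then have "strictly R v u" using sp v u le unfolding strong_pareto_def by blast
  then have vu: "(v, u) \<in> R" and uv: "(u, v) \<notin> R" by (auto simp: strictly_def)
  have trans: "\<And>a b c. (a, b) \<in> R \<Longrightarrow> (b, c) \<in> R \<Longrightarrow> (a, c) \<in> R"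
    using pre unfolding preorder_on_worlds_def by blast
  have wu: "(w, u) \<in> R" using trans[OF wvR vu] .
  have "(w \<circ> \<sigma>, u \<circ> \<sigma>) \<in> R" using pi w u S(2) wu unfolding permutation_invariant_def by blast
  moreover have "u \<circ> \<sigma> = w" by (rule ext) (simp add: u_def S(1))
  ultimately have "(u, w) \<in> R" by (simp add: u_def)
  then have "(u, v) \<in> R" using trans wvR by blast
  then show False using uv by blast
qed

theorem proposition2:
  assumes "countable (UNIV :: 'x set)" and "infinite (UNIV :: 'x set)"
  shows "preorder_on_worlds (W01 :: ('x \<Rightarrow> real) set) (sum_preorder W01)
    \<and> strong_pareto (W01 :: ('x \<Rightarrow> real) set) (sum_preorder W01)
    \<and> permutation_invariant (W01 :: ('x \<Rightarrow> real) set) (sum_preorder W01)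
    \<and> (\<forall>R. preorder_on_worlds (W01 :: ('x \<Rightarrow> real) set) R \<and> strong_pareto W01 R
           \<and> permutation_invariant W01 R
           \<longrightarrow> (\<forall>w\<in>W01. \<forall>v\<in>W01. (w, v) \<in> R \<longrightarrow> (w, v) \<in> sum_preorder W01))"
proof (intro conjI allI impI ballI)
  show "preorder_on_worlds (W01 :: ('x \<Rightarrow> real) set) (sum_preorder W01)"
    unfolding preorder_on_worlds_def
  proof (intro conjI ballI allI impI)
    show "sum_preorder W01 \<subseteq> W01 \<times> (W01 :: ('x \<Rightarrow> real) set)"
      by (auto simp: sum_preorder_def)
  next
    fix w :: "'x \<Rightarrow> real" assume "w \<in> W01"
    have "AA w w = {}" by (auto simp: AA_def)
    then show "(w, w) \<in> sum_preorder W01" using \<open>w \<in> W01\<close> by (simp add: SP_iff[OF assms] PP_def)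
  next
    fix u v w :: "'x \<Rightarrow> real"
    assume "(u, v) \<in> sum_preorder W01" "(v, w) \<in> sum_preorder W01"
    then show "(u, w) \<in> sum_preorder W01" using PP_trans by (auto simp: SP_iff[OF assms])
  qed
next
  show "strong_pareto (W01 :: ('x \<Rightarrow> real) set) (sum_preorder W01)"
    unfolding strong_pareto_def
  proof (intro ballI impI)
    fix w v :: "'x \<Rightarrow> real"
    assume w: "w \<in> W01" and v: "v \<in> W01" and h: "(\<forall>x. v x \<le> w x) \<and> (\<exists>x. v x < w x)"
    have e: "AA v w = {}" using h by (auto simp: AA_def) (metis zero_neq_one not_one_le_zero)
    obtain x where "v x < w x" using h by blast
    then have x: "x \<in> AA w v" using W01_val[OF w, of x] W01_val[OF v, of x] by (auto simp: AA_def)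
    have "PP w v" using e by (simp add: PP_def)
    moreover have "\<not> PP v w" using e x by (auto simp: PP_def card_gt_0_iff)
    ultimately show "strictly (sum_preorder W01) w v" using w v by (simp add: strictly_def SP_iff[OF assms])
  qed
next
  show "permutation_invariant (W01 :: ('x \<Rightarrow> real) set) (sum_preorder W01)"
    unfolding permutation_invariant_def using SP_perm by blast
next
  fix R :: "(('x \<Rightarrow> real) \<times> ('x \<Rightarrow> real)) set" and w v :: "'x \<Rightarrow> real"
  assume "preorder_on_worlds W01 R \<and> strong_pareto W01 R \<and> permutation_invariant W01 R"
    and "w \<in> W01" "v \<in> W01" "(w, v) \<in> R"
  then show "(w, v) \<in> sum_preorder W01"
    using maximal[OF assms(1)] by (simp add: SP_iff[OF assms]) blast
qed

end
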